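(* Let $\alpha\in(0,1]$ and let $(c,\{n_{h,\bar h}\})$ be a unitary, modular invariant 2D CFT spectrum in the sense of the context, with central charge $c\geqslant 0$. Define the error term $$\mathcal{E}(\beta_L,\beta_R):=\log Z(\beta_L,\beta_R)-\frac{c}{24}(\beta_L+\beta_R).$$ Then for every $(\beta_L,\beta_R)\in\mathcal{D}_\alpha$ the algorithm $\mathsf{A}_\alpha$ (see context) started at $(\beta_L,\beta_R)$ is well defined and stops after a finite number $N$ of points $(\beta_L^{(1)},\beta_R^{(1)}),\dots,(\beta_L^{(N)},\beta_R^{(N)})$; these satisfy $\beta_L^{(i)}\beta_R^{(i)}>4\pi^2$ for $i=1,\dots,N-1$ and $\beta_L^{(N)},\beta_R^{(N)}>2\pi$; and $$\mathcal{E}(\beta_L,\beta_R)\leqslant\log\left[\sum_{i=1}^{N}\tilde Z_L\big(\alpha;\beta_L^{(i)},\beta_R^{(i)}\big)+\tilde Z_H\big(\alpha;\beta_L^{(N)},\beta_R^{(N)}\big)\right].$$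
   Context: A unitary, modular invariant 2D CFT spectrum consists of a real number $c\geqslant0$ (central charge) and a countable collection of pairs $(h,\bar h)$ with $h,\bar h\geqslant0$, each with a multiplicity $n_{h,\bar h}\in\mathbb{N}$, such that the torus partition function $$Z(\beta_L,\beta_R)=\sum_{h,\bar h}n_{h,\bar h}\,e^{-(h-\frac{c}{24})\beta_L-(\bar h-\frac{c}{24})\beta_R}$$ is finite for all $\beta_L,\beta_R\in(0,\infty)$ and satisfies $Z(\beta_L,\beta_R)=Z(4\pi^2/\beta_L,4\pi^2/\beta_R)$ ($h-\bar h$ need not be an integer). For $\alpha\in(0,1]$ define $$\tilde Z_L(\alpha;\beta_L,\beta_R)=\sum_{\min(h,\bar h)\leqslant\frac{\alpha c}{24}}n_{h,\bar h}e^{-h\beta_L-\bar h\beta_R},\qquad \tilde Z_H(\alpha;\beta_L,\beta_R)=\sum_{h,\bar h>\frac{\alpha c}{24}}n_{h,\bar h}e^{-h\beta_L-\bar h\beta_R}.$$ Let $\phi_\alpha(\beta)=\max\left\{\frac{4\pi^2}{\beta},\ \frac12\left(\alpha(4\pi-\beta)+\sqrt{\alpha^2(4\pi-\beta)^2+16\pi^2(1-\alpha)}\right)\right\}$ and $$\mathcal{D}_\alpha=\{(\beta_L,\beta_R):\ \beta_R>2\pi,\ \beta_L>\phi_\alpha(\beta_R)\}\cup\{(\beta_L,\beta_R):\ \beta_L>2\pi,\ \beta_R>\phi_\alpha(\beta_L)\}.$$ Algorithm $\mathsf{A}_\alpha$: set $(\beta_L^{(1)},\beta_R^{(1)})=(\beta_L,\beta_R)$.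 Given $(b_L,b_R)=(\beta_L^{(i)},\beta_R^{(i)})$: (1) if $b_L>2\pi$ and $b_R>2\pi$, stop and set $N=i$. (2) If $b_L\leqslant2\pi$: put $\tilde b_L=b_L$ if $b_L<2\pi$ and $\tilde b_L=\frac{8\pi^2}{\alpha(b_R-2\pi)+4\pi}$ if $b_L=2\pi$; let $t>0$ be the unique positive solution of $\alpha b_R+\tilde b_L-\frac{4\pi^2}{\tilde b_L}+(1-\alpha)\frac{4\pi^2}{t}-t=0$; set $(\beta_L^{(i+1)},\beta_R^{(i+1)})=(4\pi^2/\tilde b_L,\ t)$. (3) Otherwise ($b_L>2\pi$, $b_R\leqslant2\pi$): do the same with the roles of $L$ and $R$ exchanged, i.e. $\tilde b_R=b_R$ if $b_R<2\pi$, $\tilde b_R=\frac{8\pi^2}{\alpha(b_L-2\pi)+4\pi}$ if $b_R=2\pi$, $t>0$ the unique positive solution of $\alpha b_L+\tilde b_R-\frac{4\pi^2}{\tilde b_R}+(1-\alpha)\frac{4\pi^2}{t}-t=0$, and $(\beta_L^{(i+1)},\beta_R^{(i+1)})=(t,\ 4\pi^2/\tilde b_R)$. *)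

theory Defs
  imports "HOL-Analysis.Analysis"
begin

text \<open>A spectrum is given by the central charge c and a multiplicity function
  n :: real \<times> real \<Rightarrow> nat; the pairs (h, hb) present in the spectrum are those with n (h,hb) > 0.\<close>

definition Zpart :: "real \<Rightarrow> (real \<times> real \<Rightarrow> nat) \<Rightarrow> real \<Rightarrow> real \<Rightarrow> real" where
  "Zpart c n bL bR = (\<Sum>\<^sub>\<infinity>(h,hb)\<in>UNIV. real (n (h,hb)) * exp (-(h - c/24) * bL - (hb - c/24) * bR))"

definition cft_spectrum :: "real \<Rightarrow> (real \<times> real \<Rightarrow> nat) \<Rightarrow> bool" where
  "cft_spectrum c n \<longleftrightarrow>
     c \<ge> 0 \<and>
     countable {p. n p \<noteq> 0} \<and>
     (\<forall>h hb. n (h,hb) \<noteq> 0 \<longrightarrow> h \<ge> 0 \<and> hb \<ge> 0) \<and>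
     (\<forall>bL bR. bL > 0 \<longrightarrow> bR > 0 \<longrightarrow>
        (\<lambda>(h,hb). real (n (h,hb)) * exp (-(h - c/24) * bL - (hb - c/24) * bR)) summable_on UNIV) \<and>
     (\<forall>bL bR. bL > 0 \<longrightarrow> bR > 0 \<longrightarrow>
        Zpart c n bL bR = Zpart c n (4*pi^2/bL) (4*pi^2/bR))"

definition ZL :: "real \<Rightarrow> (real \<times> real \<Rightarrow> nat) \<Rightarrow> real \<Rightarrow> real \<Rightarrow> real \<Rightarrow> real" where
  "ZL c n \<alpha> bL bR = (\<Sum>\<^sub>\<infinity>(h,hb)\<in>{(h,hb). min h hb \<le> \<alpha> * c / 24}.
       real (n (h,hb)) * exp (- h * bL - hb * bR))"

definition ZH :: "real \<Rightarrow> (real \<times> real \<Rightarrow> nat) \<Rightarrow> real \<Rightarrow> real \<Rightarrow> real \<Rightarrow> real" where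
  "ZH c n \<alpha> bL bR = (\<Sum>\<^sub>\<infinity>(h,hb)\<in>{(h,hb). h > \<alpha> * c / 24 \<and> hb > \<alpha> * c / 24}.
       real (n (h,hb)) * exp (- h * bL - hb * bR))"

definition err :: "real \<Rightarrow> (real \<times> real \<Rightarrow> nat) \<Rightarrow> real \<Rightarrow> real \<Rightarrow> real" where
  "err c n bL bR = ln (Zpart c n bL bR) - c/24 * (bL + bR)"

definition phi :: "real \<Rightarrow> real \<Rightarrow> real" where
  "phi \<alpha> \<beta> = max (4*pi^2/\<beta>)
     ((\<alpha> * (4*pi - \<beta>) + sqrt (\<alpha>^2 * (4*pi - \<beta>)^2 + 16*pi^2*(1 - \<alpha>))) / 2)"

definition Dom :: "real \<Rightarrow> (real \<times> real) set" where
  "Dom \<alpha> = {(bL,bR). bR > 2*pi \<and> bL > phi \<alpha> bR} \<union> {(bL,bR). bL > 2*pi \<and> bR > phi \<alpha> bL}"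

text \<open>Half-step: b is the variable that is \<le> 2 pi, b' the other one. Returns the modified b.\<close>
definition btilde :: "real \<Rightarrow> real \<Rightarrow> real \<Rightarrow> real" where
  "btilde \<alpha> b b' = (if b < 2*pi then b else 8*pi^2 / (\<alpha> * (b' - 2*pi) + 4*pi))"

definition t_eq :: "real \<Rightarrow> real \<Rightarrow> real \<Rightarrow> real \<Rightarrow> bool" where
  "t_eq \<alpha> bt b' t \<longleftrightarrow> \<alpha> * b' + bt - 4*pi^2/bt + (1 - \<alpha>) * 4*pi^2 / t - t = 0"

text \<open>One step of algorithm A_alpha from (bL,bR) to (bL',bR'), including the requirement
  that the positive solution t exists and is unique (well-definedness).\<close>
definition alg_step :: "real \<Rightarrow> real \<times> real \<Rightarrow> real \<times> real \<Rightarrow> bool" where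
  "alg_step \<alpha> p q \<longleftrightarrow>
     (let bL = fst p; bR = snd p in
      if bL \<le> 2*pi then
        (let bt = btilde \<alpha> bL bR in
          (\<exists>!t. t > 0 \<and> t_eq \<alpha> bt bR t) \<and>
          fst q = 4*pi^2 / bt \<and> snd q > 0 \<and> t_eq \<alpha> bt bR (snd q))
      else if bR \<le> 2*pi then
        (let bt = btilde \<alpha> bR bL in
          (\<exists>!t. t > 0 \<and> t_eq \<alpha> bt bL t) \<and>
          snd q = 4*pi^2 / bt \<and> fst q > 0 \<and> t_eq \<alpha> bt bL (fst q))
      else False)"

end

theory Submission
  imports Defs
begin

definition GG :: "real \<Rightarrow> real \<Rightarrow> real" where
  "GG \<alpha> x = x - (1 - \<alpha>) * 4*pi^2 / x"

definition Tr :: "real \<Rightarrow> real \<Rightarrow> real" where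
  "Tr \<alpha> A = (A + sqrt (A^2 + 16*pi^2*(1-\<alpha>))) / 2"

lemma GG_alt: "GG \<alpha> z = z - 4*pi^2/z + \<alpha>*(4*pi^2/z)"
  unfolding GG_def by (simp add: algebra_simps diff_divide_distrib)

lemma GG_diff:
  assumes "0 < a" "0 < b"
  shows "GG \<alpha> b - GG \<alpha> a = (b - a) * (1 + (1 - \<alpha>) * 4*pi^2 / (a*b))"
  using assms unfolding GG_def by (simp add: field_simps)

lemma GG_mono:
  assumes "0 < a" "a < b" "\<alpha> \<le> 1"
  shows "GG \<alpha> a < GG \<alpha> b"
proof -
  have "0 \<le> (1 - \<alpha>) * 4*pi^2 / (a*b)" using assms by simp
  hence "0 < (b - a) * (1 + (1 - \<alpha>) * 4*pi^2 / (a*b))" using assms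
    by (intro mult_pos_pos) linarith+
  thus ?thesis using GG_diff[of a b \<alpha>] assms by simp
qed

lemma GG_less_iff:
  assumes "0 < a" "0 < b" "\<alpha> \<le> 1"
  shows "GG \<alpha> a < GG \<alpha> b \<longleftrightarrow> a < b"
  using GG_mono[of a b \<alpha>] GG_mono[of b a \<alpha>] assms by (cases a b rule: linorder_cases) auto

lemma GG_le_iff:
  assumes "0 < a" "0 < b" "\<alpha> \<le> 1"
  shows "GG \<alpha> a \<le> GG \<alpha> b \<longleftrightarrow> a \<le> b"
  using GG_less_iff[of b a \<alpha>] assms by linarith

lemma Tr_props:
  assumes "\<alpha> \<le> 1" "0 < A \<or> \<alpha> < 1"
  shows "0 < Tr \<alpha> A" "GG \<alpha> (Tr \<alpha> A) = A"
proof -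
  define D where "D = A^2 + 16*pi^2*(1-\<alpha>)"
  have D0: "A^2 \<le> D" using assms by (simp add: D_def)
  have sD: "sqrt D ^ 2 = D" proof -
    have "0 \<le> D" using D0 zero_le_power2[of A] by linarith
    thus ?thesis by simp
  qed
  have "\<bar>A\<bar> \<le> sqrt D" using D0 real_sqrt_le_mono[OF D0] by simp
  moreover have "\<alpha> < 1 \<Longrightarrow> \<bar>A\<bar> < sqrt D"
  proof -
    assume "\<alpha> < 1" hence "A^2 < D" by (simp add: D_def)
    thus ?thesis using real_sqrt_less_mono[of "A^2" D] by simp
  qed
  ultimately have pos: "0 < A + sqrt D" using assms by linarith
  show t0: "0 < Tr \<alpha> A" using pos by (simp add: Tr_def D_def[symmetric])
  define t where "t = Tr \<alpha> A"
  have teq: "t = (A + sqrt D)/2" by (simp add: t_def Tr_def D_def)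
  have "t^2 - A*t = (D - A^2)/4" unfolding teq using sD by (simp add: field_simps power2_eq_square)
  hence "t^2 - A*t = 4*pi^2*(1-\<alpha>)" by (simp add: D_def)
  hence "GG \<alpha> t = A" using t0 unfolding GG_def t_def[symmetric]
    by (simp add: field_simps power2_eq_square)
  thus "GG \<alpha> (Tr \<alpha> A) = A" by (simp add: t_def)
qed

lemma t_eq_iff: "t_eq \<alpha> bt b t \<longleftrightarrow> GG \<alpha> t = \<alpha>*b + bt - 4*pi^2/bt"
  unfolding t_eq_def GG_def by linarith

lemma btilde_props:
  assumes "0 < \<alpha>" "\<alpha> \<le> 1" "0 < x" "x \<le> 2*pi" "2*pi < y" "4*pi^2 < x*y"
  shows "0 < btilde \<alpha> x y" "btilde \<alpha> x y \<le> x" "btilde \<alpha> x y < 2*pi"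
        "4*pi^2 \<le> btilde \<alpha> x y * y"
proof -
  have "0 < btilde \<alpha> x y \<and> btilde \<alpha> x y \<le> x \<and> btilde \<alpha> x y < 2*pi \<and> 4*pi^2 \<le> btilde \<alpha> x y * y"
  proof (cases "x < 2*pi")
    case True thus ?thesis using assms by (simp add: btilde_def)
  next
    case False
    hence x: "x = 2*pi" using assms by linarith
    define d where "d = \<alpha>*(y-2*pi) + 4*pi"
    have "0 < \<alpha>*(y-2*pi)" using assms by simp
    hence d: "4*pi < d" by (simp add: d_def)
    have pd: "0 < d" using d pi_gt_zero by linarith
    have bt: "btilde \<alpha> x y = 8*pi^2/d" using x by (simp add: btilde_def d_def)
    have "8*pi^2 < 2*pi*d" using d pi_gt_zero by (simp add: power2_eq_square)
    hence b1: "8*pi^2/d < 2*pi" using pd by (simp add: divide_less_eq)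
    have "(2-\<alpha>)*(y-2*pi) \<ge> 0" using assms by simp
    moreover have "8*pi^2*y - 4*pi^2*d = 4*pi^2*((2-\<alpha>)*(y-2*pi))"
      by (simp add: d_def algebra_simps power2_eq_square)
    ultimately have "4*pi^2 * d \<le> 8*pi^2*y"
      by (metis diff_ge_0_iff_ge mult_nonneg_nonneg zero_le_power2 zero_le_numeral)
    hence b2: "4*pi^2 \<le> 8*pi^2/d * y" using pd by (simp add: le_divide_eq mult.commute mult.left_commute)
    show ?thesis using bt b1 b2 pd x by simp
  qed
  thus "0 < btilde \<alpha> x y" "btilde \<alpha> x y \<le> x" "btilde \<alpha> x y < 2*pi"
        "4*pi^2 \<le> btilde \<alpha> x y * y" by auto
qed

lemma valid_step:
  assumes "0 < \<alpha>" "\<alpha> \<le> 1" "0 < x" "x \<le> 2*pi" "2*pi < y" "4*pi^2 < x*y"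
  defines "bt \<equiv> btilde \<alpha> x y"
  defines "A \<equiv> \<alpha>*y + bt - 4*pi^2/bt"
  defines "t \<equiv> Tr \<alpha> A"
  shows "0 < t" "GG \<alpha> t = A" "4*pi^2 \<le> t*y"
    "4*pi^2/bt + t - bt - 4*pi^2/t \<le> \<alpha>*(x + y - bt - 4*pi^2/t)"
proof -
  note b = btilde_props[OF assms(1-6), folded bt_def]
  have y0: "0 < y" using assms pi_gt_zero by linarith
  have q: "4*pi^2/bt \<le> y" using b y0 by (simp add: divide_le_eq mult.commute)
  have "0 < A \<or> \<alpha> < 1"
  proof (cases "\<alpha> = 1")
    case True thus ?thesis using q b by (simp add: A_def)
  qed (use assms in auto)
  note T = Tr_props[OF assms(2) this, folded t_def]
  show "0 < t" "GG \<alpha> t = A" using T by auto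
  have p0: "0 < 4*pi^2/y" using y0 by simp
  have "GG \<alpha> (4*pi^2/y) = 4*pi^2/y - (1-\<alpha>)*y" unfolding GG_def using y0 by (simp add: field_simps)
  moreover have "A - (4*pi^2/y - (1-\<alpha>)*y) = (bt*y - 4*pi^2)*(1/bt + 1/y)"
    unfolding A_def using b y0 by (simp add: field_simps)
  moreover have "(bt*y - 4*pi^2)*(1/bt + 1/y) \<ge> 0" using b y0 by simp
  ultimately have "GG \<alpha> (4*pi^2/y) \<le> GG \<alpha> t" using T by simp
  hence "4*pi^2/y \<le> t" using GG_le_iff[OF p0 T(1) assms(2)] by simp
  thus "4*pi^2 \<le> t*y" using y0 by (simp add: divide_le_eq)
  have "t - (1 - \<alpha>) * 4*pi^2 / t = A" using T unfolding GG_def by simp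
  hence "4*pi^2/bt + t - bt - 4*pi^2/t = \<alpha>*y - \<alpha>*4*pi^2/t" unfolding A_def using T(1)
    by (simp add: field_simps)
  thus "4*pi^2/bt + t - bt - 4*pi^2/t \<le> \<alpha>*(x + y - bt - 4*pi^2/t)"
    using b assms(1) by (simp add: algebra_simps)
qed

definition nxt :: "real \<Rightarrow> real \<times> real \<Rightarrow> real \<times> real" where
  "nxt \<alpha> p = (let x = fst p; y = snd p; bt = btilde \<alpha> x y in
      (Tr \<alpha> (\<alpha>*y + bt - 4*pi^2/bt), 4*pi^2/bt))"

lemma at2pi:
  assumes "0 < \<alpha>" "\<alpha> \<le> 1" "2*pi < y"
  shows "2*pi < fst (nxt \<alpha> (2*pi, y))" "2*pi < snd (nxt \<alpha> (2*pi, y))"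
proof -
  have xy: "4*pi^2 < 2*pi*y" using assms pi_gt_zero by (simp add: power2_eq_square)
  have p2: "0 < 2*pi" "2*pi \<le> 2*pi" using pi_gt_zero by auto
  define bt where "bt = btilde \<alpha> (2*pi) y"
  define A where "A = \<alpha>*y + bt - 4*pi^2/bt"
  note b = btilde_props[OF assms(1,2) p2 assms(3) xy, folded bt_def]
  note v = valid_step[OF assms(1,2) p2 assms(3) xy, folded bt_def, folded A_def]
  have "2*pi*bt < 2*pi*(2*pi)" using b pi_gt_zero by (intro mult_strict_left_mono) auto
  hence "2*pi < 4*pi^2/bt" using b by (simp add: less_divide_eq power2_eq_square)
  thus "2*pi < snd (nxt \<alpha> (2*pi, y))" by (simp add: nxt_def bt_def Let_def)
  define d where "d = \<alpha>*(y-2*pi) + 4*pi"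
  have "0 < \<alpha>*(y-2*pi)" using assms by simp
  hence d: "4*pi < d" by (simp add: d_def)
  have pd: "0 < d" using d pi_gt_zero by linarith
  have btd: "bt = 8*pi^2/d" by (simp add: bt_def btilde_def d_def)
  have e1: "4*pi^2/bt = d/2" unfolding btd using pd pi_gt_zero by (simp add: field_simps power2_eq_square)
  have e2: "\<alpha>*y = d - 4*pi + 2*pi*\<alpha>" by (simp add: d_def algebra_simps)
  have "A - 2*pi*\<alpha> = d/2 - 4*pi + 8*pi^2/d" by (simp add: A_def e1 e2 btd)
  also have "\<dots> = (d-4*pi)^2/(2*d)" using pd by (simp add: field_simps power2_eq_square)
  also have "\<dots> > 0" using d pd by (intro divide_pos_pos) auto
  finally have "A > 2*pi*\<alpha>" by simp
  moreover have "GG \<alpha> (2*pi) = 2*pi*\<alpha>" unfolding GG_def using pi_gt_zero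
    by (simp add: field_simps power2_eq_square)
  ultimately have "GG \<alpha> (2*pi) < GG \<alpha> (Tr \<alpha> A)" using v by simp
  hence "2*pi < Tr \<alpha> A" using GG_less_iff[OF p2(1) v(1) assms(2)] by (simp add: A_def)
  thus "2*pi < fst (nxt \<alpha> (2*pi, y))" by (simp add: nxt_def bt_def A_def Let_def)
qed

lemma hbound:
  fixes a b x C :: real
  assumes "0 < a" "a \<le> x" "x \<le> b"
  shows "x + C/x \<le> max (a + C/a) (b + C/b)"
proof (cases "C \<le> 0")
  case True
  have e: "C/x - C/b = C*(b-x)/(x*b)" using assms by (simp add: field_simps)
  have "C*(b-x)/(x*b) \<le> 0" using assms True by (intro divide_nonpos_pos mult_nonpos_nonneg) auto
  hence "C/x \<le> C/b" using e by simp
  thus ?thesis using assms by simp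
next
  case False
  have e1: "x + C/x - (a + C/a) = (x-a)*(1 - C/(a*x))" using assms by (simp add: field_simps)
  have e2: "x + C/x - (b + C/b) = (b-x)*(C/(b*x) - 1)" using assms by (simp add: field_simps)
  show ?thesis
  proof (cases "1 - C/(a*x) \<le> 0")
    case True
    hence "(x-a)*(1 - C/(a*x)) \<le> 0" using assms by (simp add: mult_nonneg_nonpos)
    thus ?thesis using e1 by simp
  next
    case F2: False
    hence "C < a*x" using assms by (simp add: field_simps)
    also have "a*x \<le> b*x" using assms by (simp add: mult_right_mono)
    finally have "C/(b*x) < 1" using assms by (simp add: field_simps)
    hence "(b-x)*(C/(b*x) - 1) \<le> 0" using assms by (simp add: mult_nonneg_nonpos)
    thus ?thesis using e2 by simp
  qed
qed

lemma inv_step: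
  assumes "0 < \<alpha>" "\<alpha> \<le> 1" "0 < x1" "x1 \<le> x" "x < 2*pi" "2*pi < y" "4*pi^2 < x*y"
    and "GG \<alpha> x + \<alpha>*y = I"
    and "\<delta> * (1 + (1-\<alpha>)*4*pi^2/x1^2) \<le> I - (GG \<alpha> x + \<alpha>*4*pi^2/x)"
  shows "x + \<delta> \<le> fst (nxt \<alpha> (x,y))" "GG \<alpha> (fst (nxt \<alpha> (x,y))) + \<alpha> * snd (nxt \<alpha> (x,y)) = I"
    "4*pi^2 < fst (nxt \<alpha> (x,y)) * snd (nxt \<alpha> (x,y))" "2*pi < snd (nxt \<alpha> (x,y))"
    "0 < fst (nxt \<alpha> (x,y))"
proof -
  have x0: "0 < x" using assms by linarith
  have bt: "btilde \<alpha> x y = x" using assms by (simp add: btilde_def)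
  define t where "t = Tr \<alpha> (\<alpha>*y + x - 4*pi^2/x)"
  have nx: "nxt \<alpha> (x,y) = (t, 4*pi^2/x)" by (simp add: nxt_def bt t_def Let_def)
  note v = valid_step[OF assms(1,2) x0 _ assms(6,7), unfolded bt, folded t_def]
  have t0: "0 < t" "GG \<alpha> t = \<alpha>*y + x - 4*pi^2/x" using v assms(5) by auto
  show "0 < fst (nxt \<alpha> (x,y))" using t0 nx by simp
  have d: "GG \<alpha> t - GG \<alpha> x = I - (GG \<alpha> x + \<alpha>*4*pi^2/x)"
  proof -
    have "\<alpha>*4*pi^2/x = \<alpha>*(4*pi^2/x)" by simp
    thus ?thesis using t0(2) assms(8) GG_alt[of \<alpha> x] by linarith
  qed
  have "4*pi^2/x < y" using assms x0 by (simp add: divide_less_eq mult.commute)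
  hence "0 < \<alpha>*(y - 4*pi^2/x)" using assms(1) by simp
  moreover have "I - (GG \<alpha> x + \<alpha>*4*pi^2/x) = \<alpha>*(y - 4*pi^2/x)"
    using assms(8) by (simp add: algebra_simps)
  ultimately have pos: "0 < I - (GG \<alpha> x + \<alpha>*4*pi^2/x)" by simp
  hence "x < t" using GG_less_iff[OF x0 t0(1) assms(2)] d by simp
  show "GG \<alpha> (fst (nxt \<alpha> (x,y))) + \<alpha> * snd (nxt \<alpha> (x,y)) = I"
    using t0(2) assms(8) nx unfolding GG_alt by simp
  have "4*pi^2 < t * (4*pi^2/x)" using \<open>x < t\<close> x0 by (simp add: field_simps)
  thus "4*pi^2 < fst (nxt \<alpha> (x,y)) * snd (nxt \<alpha> (x,y))" using nx by simp
  have "4*pi^2/(2*pi) < 4*pi^2/x" using x0 assms(5) by (intro divide_strict_left_mono) auto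
  hence "2*pi < 4*pi^2/x" by (simp add: power2_eq_square)
  thus "2*pi < snd (nxt \<alpha> (x,y))" using nx by simp
  define K where "K = 1 + (1-\<alpha>)*4*pi^2/x1^2"
  have "x1*x1 \<le> x*t" using assms \<open>x < t\<close> by (intro mult_mono) auto
  hence "x1^2 \<le> x*t" by (simp add: power2_eq_square)
  moreover have "0 < x*t*x1^2" using x0 t0(1) assms(3) by simp
  ultimately have "(1-\<alpha>)*4*pi^2/(x*t) \<le> (1-\<alpha>)*4*pi^2/x1^2" using assms
    by (intro divide_left_mono) auto
  hence "GG \<alpha> t - GG \<alpha> x \<le> (t - x) * K" unfolding K_def GG_diff[OF x0 t0(1)]
    using \<open>x < t\<close> by (intro mult_left_mono) auto
  hence "\<delta> * K \<le> (t - x) * K" using d assms(9) K_def by simp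
  moreover have "0 < K"
  proof -
    have "0 \<le> (1-\<alpha>)*4*pi^2/x1^2" using assms(2) by simp
    thus ?thesis unfolding K_def by linarith
  qed
  ultimately have "\<delta> \<le> t - x" by simp
  thus "x + \<delta> \<le> fst (nxt \<alpha> (x,y))" using nx by simp
qed

lemma h_id:
  assumes "0 < x"
  shows "GG \<alpha> x + \<alpha>*4*pi^2/x = x + (2*\<alpha>-1)*4*pi^2/x"
  unfolding GG_def using assms by (simp add: field_simps)

lemma inv_seq:
  assumes "0 < \<alpha>" "\<alpha> \<le> 1" "0 < x1" "x1 < 2*pi" "2*pi < y1" "4*pi^2 < x1*y1"
    and I: "I = GG \<alpha> x1 + \<alpha>*y1" and d0: "0 \<le> \<delta>"
    and dl: "\<delta> * (1 + (1-\<alpha>)*4*pi^2/x1^2) \<le> I - max (x1 + (2*\<alpha>-1)*4*pi^2/x1) (2*pi + (2*\<alpha>-1)*4*pi^2/(2*pi))"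
  shows "(\<forall>j<k. fst ((nxt \<alpha> ^^ j) (x1,y1)) < 2*pi) \<Longrightarrow>
     x1 + real k * \<delta> \<le> fst ((nxt \<alpha> ^^ k) (x1,y1)) \<and>
     GG \<alpha> (fst ((nxt \<alpha> ^^ k) (x1,y1))) + \<alpha> * snd ((nxt \<alpha> ^^ k) (x1,y1)) = I \<and>
     4*pi^2 < fst ((nxt \<alpha> ^^ k) (x1,y1)) * snd ((nxt \<alpha> ^^ k) (x1,y1)) \<and>
     2*pi < snd ((nxt \<alpha> ^^ k) (x1,y1)) \<and> 0 < fst ((nxt \<alpha> ^^ k) (x1,y1))"
proof (induction k)
  case 0 show ?case using assms by simp
next
  case (Suc k)
  from Suc.prems have "\<forall>j<k. fst ((nxt \<alpha> ^^ j) (x1,y1)) < 2*pi" by simp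
  note ih = Suc.IH[OF this]
  obtain x y where xy: "(nxt \<alpha> ^^ k) (x1,y1) = (x,y)" by (cases "(nxt \<alpha> ^^ k) (x1,y1)") auto
  have xlt: "x < 2*pi" using Suc.prems xy by (metis fst_conv lessI)
  have ih': "x1 + real k * \<delta> \<le> x" "GG \<alpha> x + \<alpha>*y = I" "4*pi^2 < x*y" "2*pi < y" "0 < x"
    using ih xy by auto
  have "0 \<le> real k * \<delta>" using d0 by simp
  hence x1x: "x1 \<le> x" using ih' by linarith
  have "x + (2*\<alpha>-1)*4*pi^2/x \<le> max (x1 + (2*\<alpha>-1)*4*pi^2/x1) (2*pi + (2*\<alpha>-1)*4*pi^2/(2*pi))"
    using hbound[OF assms(3) x1x, of "2*pi" "(2*\<alpha>-1)*4*pi^2"] xlt by simp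
  hence "\<delta> * (1 + (1-\<alpha>)*4*pi^2/x1^2) \<le> I - (GG \<alpha> x + \<alpha>*4*pi^2/x)"
    using dl h_id[OF ih'(5), of \<alpha>] by linarith
  note st = inv_step[OF assms(1,2,3) x1x xlt ih'(4,3,2) this]
  have eq: "(nxt \<alpha> ^^ Suc k) (x1,y1) = nxt \<alpha> (x,y)" using xy by simp
  show ?case unfolding eq using st ih'(1) by (simp add: algebra_simps)
qed

lemma dyn:
  assumes "0 < \<alpha>" "\<alpha> \<le> 1" "0 < x1" "x1 \<le> 2*pi" "2*pi < y1" "4*pi^2 < x1*y1"
    and dom: "x1 < 2*pi \<Longrightarrow> 4*pi*\<alpha> < GG \<alpha> x1 + \<alpha>*y1"
  shows "\<exists>M. (\<forall>j<M. 0 < fst ((nxt \<alpha> ^^ j) (x1,y1)) \<and> fst ((nxt \<alpha> ^^ j) (x1,y1)) \<le> 2*pi \<and>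
              2*pi < snd ((nxt \<alpha> ^^ j) (x1,y1)) \<and>
              4*pi^2 < fst ((nxt \<alpha> ^^ j) (x1,y1)) * snd ((nxt \<alpha> ^^ j) (x1,y1))) \<and>
            2*pi < fst ((nxt \<alpha> ^^ M) (x1,y1)) \<and> 2*pi < snd ((nxt \<alpha> ^^ M) (x1,y1))"
proof (cases "x1 = 2*pi")
  case True
  have "\<forall>j<1. 0 < fst ((nxt \<alpha> ^^ j) (x1,y1)) \<and> fst ((nxt \<alpha> ^^ j) (x1,y1)) \<le> 2*pi \<and>
              2*pi < snd ((nxt \<alpha> ^^ j) (x1,y1)) \<and>
              4*pi^2 < fst ((nxt \<alpha> ^^ j) (x1,y1)) * snd ((nxt \<alpha> ^^ j) (x1,y1))"
    using assms by simp
  moreover have "2*pi < fst ((nxt \<alpha> ^^ 1) (x1,y1)) \<and> 2*pi < snd ((nxt \<alpha> ^^ 1) (x1,y1))"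
    using at2pi[OF assms(1,2,5)] True by simp
  ultimately show ?thesis by blast
next
  case False
  hence x1l: "x1 < 2*pi" using assms by simp
  define seq where "seq j = (nxt \<alpha> ^^ j) (x1,y1)" for j
  define I where "I = GG \<alpha> x1 + \<alpha>*y1"
  define m where "m = max (x1 + (2*\<alpha>-1)*4*pi^2/x1) (2*pi + (2*\<alpha>-1)*4*pi^2/(2*pi))"
  define K where "K = 1 + (1-\<alpha>)*4*pi^2/x1^2"
  have K0: "0 < K"
  proof -
    have "0 \<le> (1-\<alpha>)*4*pi^2/x1^2" using assms(2) by simp
    thus ?thesis unfolding K_def by linarith
  qed
  have "2*pi + (2*\<alpha>-1)*4*pi^2/(2*pi) = 4*pi*\<alpha>" by (simp add: field_simps power2_eq_square)
  hence m1: "2*pi + (2*\<alpha>-1)*4*pi^2/(2*pi) < I" using dom[OF x1l] I_def by simp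
  have "4*pi^2/x1 < y1" using assms by (simp add: divide_less_eq mult.commute)
  hence "\<alpha>*(4*pi^2/x1) < \<alpha>*y1" using assms(1) by (intro mult_strict_left_mono) auto
  moreover have "\<alpha>*4*pi^2/x1 = \<alpha>*(4*pi^2/x1)" by simp
  ultimately have m2: "x1 + (2*\<alpha>-1)*4*pi^2/x1 < I" using h_id[OF assms(3), of \<alpha>] I_def by linarith
  have mI: "m < I" using m1 m2 m_def by simp
  define \<delta> where "\<delta> = (I - m)/K"
  have d0: "0 < \<delta>" using mI K0 by (simp add: \<delta>_def)
  have dK: "\<delta> * K = I - m" using K0 by (simp add: \<delta>_def)
  note IS = inv_seq[OF assms(1,2,3) x1l assms(5,6) I_def less_imp_le[OF d0], folded K_def m_def,
      OF eq_refl[OF dK], folded seq_def]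
  obtain k0 :: nat where k0: "2*pi < real k0 * \<delta>" using reals_Archimedean3[OF d0] by blast
  have ex: "\<exists>k. 2*pi \<le> fst (seq k)"
  proof (rule ccontr)
    assume na: "\<not> (\<exists>k. 2*pi \<le> fst (seq k))"
    hence "\<forall>j<k0. fst (seq j) < 2*pi" by (simp add: not_le)
    from IS[OF this] have "x1 + real k0 * \<delta> \<le> fst (seq k0)" by simp
    moreover have "fst (seq k0) < 2*pi" using na by (simp add: not_le)
    ultimately show False using k0 assms(3) by linarith
  qed
  define L where "L = (LEAST k. 2*pi \<le> fst (seq k))"
  have L1: "2*pi \<le> fst (seq L)" unfolding L_def by (rule LeastI_ex[OF ex])
  have L2: "\<forall>j<L. fst (seq j) < 2*pi" unfolding L_def using not_less_Least by (metis not_le)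
  have before: "\<forall>j<L. 0 < fst (seq j) \<and> fst (seq j) \<le> 2*pi \<and> 2*pi < snd (seq j) \<and>
              4*pi^2 < fst (seq j) * snd (seq j)"
  proof (intro allI impI)
    fix j assume "j < L"
    hence "\<forall>i<j. fst (seq i) < 2*pi" using L2 by simp
    from IS[OF this] \<open>j < L\<close> L2 show "0 < fst (seq j) \<and> fst (seq j) \<le> 2*pi \<and> 2*pi < snd (seq j) \<and>
              4*pi^2 < fst (seq j) * snd (seq j)" by auto
  qed
  have atL: "2*pi < snd (seq L)" "4*pi^2 < fst (seq L) * snd (seq L)" using IS[OF L2] by auto
  show ?thesis
  proof (cases "fst (seq L) = 2*pi")
    case False
    hence "2*pi < fst (seq L)" using L1 by simp
    thus ?thesis using before atL unfolding seq_def by blast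
  next
    case True
    have "\<forall>j<Suc L. 0 < fst (seq j) \<and> fst (seq j) \<le> 2*pi \<and> 2*pi < snd (seq j) \<and>
              4*pi^2 < fst (seq j) * snd (seq j)"
      using before atL True pi_gt_zero by (auto simp: less_Suc_eq)
    moreover have "seq (Suc L) = nxt \<alpha> (2*pi, snd (seq L))"
      unfolding seq_def using True by (metis funpow.simps(2) o_apply prod.collapse seq_def)
    hence "2*pi < fst (seq (Suc L)) \<and> 2*pi < snd (seq (Suc L))"
      using at2pi[OF assms(1,2) atL(1)] by simp
    ultimately show ?thesis unfolding seq_def by blast
  qed
qed

definition ww :: "(real \<times> real \<Rightarrow> nat) \<Rightarrow> real \<Rightarrow> real \<Rightarrow> real \<times> real \<Rightarrow> real" where
  "ww n a b = (\<lambda>(h,hb). real (n (h,hb)) * exp (- h * a - hb * b))"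

definition SS :: "(real \<times> real \<Rightarrow> nat) \<Rightarrow> real \<Rightarrow> real \<Rightarrow> real" where
  "SS n a b = infsum (ww n a b) UNIV"

lemma ZL_eq: "ZL c n \<alpha> a b = infsum (ww n a b) {(h,hb). min h hb \<le> \<alpha> * c / 24}"
  by (simp add: ZL_def ww_def)

lemma ZH_eq: "ZH c n \<alpha> a b = infsum (ww n a b) {(h,hb). h > \<alpha> * c / 24 \<and> hb > \<alpha> * c / 24}"
  by (simp add: ZH_def ww_def)

lemma ww_nonneg: "0 \<le> ww n a b p"
  by (cases p) (simp add: ww_def)

lemma ww_summable:
  assumes "cft_spectrum c n" "0 < a" "0 < b"
  shows "ww n a b summable_on A"
proof -
  let ?f = "\<lambda>(h,hb). real (n (h,hb)) * exp (-(h - c/24) * a - (hb - c/24) * b)"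
  have "?f summable_on UNIV" using assms unfolding cft_spectrum_def by blast
  hence "(\<lambda>p. exp (-(c/24)*(a+b)) * ?f p) summable_on UNIV" by (rule summable_on_cmult_right)
  moreover have "\<And>p. exp (-(c/24)*(a+b)) * ?f p = ww n a b p"
  proof -
    fix p :: "real \<times> real" obtain h hb where p: "p = (h,hb)" by (cases p)
    have "exp (-(c/24)*(a+b)) * exp (-(h - c/24) * a - (hb - c/24) * b) = exp (- h * a - hb * b)"
      unfolding exp_add[symmetric] by (simp add: algebra_simps)
    thus "exp (-(c/24)*(a+b)) * ?f p = ww n a b p" by (simp add: p ww_def)
  qed
  ultimately have "ww n a b summable_on UNIV" by simp
  thus ?thesis using summable_on_subset_banach by blast
qed

lemma Zpart_eq:
  assumes "cft_spectrum c n" "0 < a" "0 < b"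
  shows "Zpart c n a b = exp ((c/24)*(a+b)) * SS n a b"
proof -
  have "Zpart c n a b = infsum (\<lambda>p. exp ((c/24)*(a+b)) * ww n a b p) UNIV"
    unfolding Zpart_def
  proof (rule infsum_cong)
    fix p :: "real \<times> real" obtain h hb where p: "p = (h,hb)" by (cases p)
    have "exp ((c/24)*(a+b)) * exp (- h * a - hb * b) = exp (-(h - c/24) * a - (hb - c/24) * b)"
      unfolding exp_add[symmetric] by (simp add: algebra_simps)
    thus "(case p of (h, hb) \<Rightarrow> real (n (h, hb)) * exp (- (h - c / 24) * a - (hb - c / 24) * b)) =
         exp ((c/24)*(a+b)) * ww n a b p" by (simp add: p ww_def)
  qed
  thus ?thesis by (simp add: infsum_cmult_right' SS_def)
qed

lemma SS_split:
  assumes "cft_spectrum c n" "0 < a" "0 < b"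
  shows "SS n a b = ZL c n \<alpha> a b + ZH c n \<alpha> a b"
proof -
  let ?A = "{(h,hb). min h hb \<le> \<alpha> * c / 24}"
  let ?B = "{(h::real,hb::real). h > \<alpha> * c / 24 \<and> hb > \<alpha> * c / 24}"
  have u: "?A \<union> ?B = UNIV" by auto
  have d: "?A \<inter> ?B = {}" by auto
  show ?thesis unfolding SS_def ZL_eq ZH_eq u[symmetric]
    by (rule infsum_Un_disjoint[OF ww_summable[OF assms] ww_summable[OF assms] d])
qed

lemma SS_nonneg: "0 \<le> SS n a b"
  unfolding SS_def by (rule infsum_nonneg) (rule ww_nonneg)

lemma ZL_nonneg: "0 \<le> ZL c n \<alpha> a b"
  unfolding ZL_eq by (rule infsum_nonneg) (rule ww_nonneg)

lemma ZH_nonneg: "0 \<le> ZH c n \<alpha> a b"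
  unfolding ZH_eq by (rule infsum_nonneg) (rule ww_nonneg)

lemma SS_modular:
  assumes "cft_spectrum c n" "0 < a" "0 < b"
  shows "SS n a b = exp ((c/24)*(4*pi^2/a + 4*pi^2/b - a - b)) * SS n (4*pi^2/a) (4*pi^2/b)"
proof -
  have a2: "0 < 4*pi^2/a" "0 < 4*pi^2/b" using assms by auto
  have "Zpart c n a b = Zpart c n (4*pi^2/a) (4*pi^2/b)" using assms unfolding cft_spectrum_def by blast
  hence "exp ((c/24)*(a+b)) * SS n a b = exp ((c/24)*(4*pi^2/a + 4*pi^2/b)) * SS n (4*pi^2/a) (4*pi^2/b)"
    using Zpart_eq[OF assms] Zpart_eq[OF assms(1) a2] by simp
  hence "SS n a b = exp (-(c/24)*(a+b)) * (exp ((c/24)*(4*pi^2/a + 4*pi^2/b)) * SS n (4*pi^2/a) (4*pi^2/b))"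
    by (metis (no_types, lifting) exp_minus_inverse mult.assoc mult.left_neutral mult_minus_left)
  also have "\<dots> = exp ((c/24)*(4*pi^2/a + 4*pi^2/b - a - b)) * SS n (4*pi^2/a) (4*pi^2/b)"
    unfolding mult.assoc[symmetric] exp_add[symmetric] by (simp add: algebra_simps)
  finally show ?thesis .
qed

lemma H_step:
  assumes "cft_spectrum c n" "0 < \<alpha>" "0 < a'" "0 < b'" "a' \<le> bL" "b' \<le> bR"
    and cond: "4*pi^2/a' + 4*pi^2/b' - a' - b' \<le> \<alpha>*(bL + bR - a' - b')"
  shows "ZH c n \<alpha> bL bR \<le> SS n (4*pi^2/a') (4*pi^2/b')"
proof -
  have c0: "0 \<le> c" using assms(1) unfolding cft_spectrum_def by simp
  have bL0: "0 < bL" "0 < bR" using assms by auto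
  let ?B = "{(h::real,hb::real). h > \<alpha> * c / 24 \<and> hb > \<alpha> * c / 24}"
  define E1 where "E1 = exp (-(\<alpha>*c/24)*(bL - a' + bR - b'))"
  have "ZH c n \<alpha> bL bR \<le> infsum (\<lambda>p. E1 * ww n a' b' p) ?B"
    unfolding ZH_eq
  proof (rule infsum_mono[OF ww_summable[OF assms(1) bL0] summable_on_cmult_right[OF ww_summable[OF assms(1,3,4)]]])
    fix p assume "p \<in> ?B"
    then obtain h hb where p: "p = (h,hb)" "h > \<alpha>*c/24" "hb > \<alpha>*c/24" by auto
    have "(\<alpha>*c/24)*(bL - a') \<le> h*(bL - a')" using p assms by (intro mult_right_mono) auto
    moreover have "(\<alpha>*c/24)*(bR - b') \<le> hb*(bR - b')" using p assms by (intro mult_right_mono) auto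
    moreover have "-(\<alpha>*c/24)*(bL - a' + bR - b') = -((\<alpha>*c/24)*(bL - a') + (\<alpha>*c/24)*(bR - b'))"
      by (simp only: distrib_left diff_conv_add_uminus minus_add)
    moreover have "h*(bL - a') = h*bL - h*a'" "hb*(bR - b') = hb*bR - hb*b'" by (simp_all add: algebra_simps)
    ultimately have "- h * bL - hb * bR \<le> -(\<alpha>*c/24)*(bL - a' + bR - b') + (- h * a' - hb * b')"
      by linarith
    hence "exp (- h * bL - hb * bR) \<le> E1 * exp (- h * a' - hb * b')"
      unfolding E1_def exp_add[symmetric] by simp
    hence "real (n (h,hb)) * exp (- h * bL - hb * bR) \<le> real (n (h,hb)) * (E1 * exp (- h * a' - hb * b'))"
      by (intro mult_left_mono) auto
    thus "ww n bL bR p \<le> E1 * ww n a' b' p" by (simp add: p ww_def algebra_simps)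
  qed
  also have "\<dots> = E1 * ZH c n \<alpha> a' b'" unfolding ZH_eq by (simp add: infsum_cmult_right')
  also have "\<dots> \<le> E1 * SS n a' b'"
    using SS_split[OF assms(1,3,4), of \<alpha>] ZL_nonneg[of c n \<alpha> a' b'] by (simp add: E1_def)
  also have "\<dots> = (E1 * exp ((c/24)*(4*pi^2/a' + 4*pi^2/b' - a' - b'))) * SS n (4*pi^2/a') (4*pi^2/b')"
    using SS_modular[OF assms(1,3,4)] by simp
  also have "\<dots> \<le> 1 * SS n (4*pi^2/a') (4*pi^2/b')"
  proof (rule mult_right_mono[OF _ SS_nonneg])
    have "(c/24)*(4*pi^2/a' + 4*pi^2/b' - a' - b') \<le> (c/24)*(\<alpha>*(bL + bR - a' - b'))"
      using cond c0 by (intro mult_left_mono) auto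
    moreover have "(\<alpha>*c/24)*(bL - a' + bR - b') = (c/24)*(\<alpha>*(bL + bR - a' - b'))"
      by (simp add: field_simps)
    ultimately have "-(\<alpha>*c/24)*(bL - a' + bR - b') + (c/24)*(4*pi^2/a' + 4*pi^2/b' - a' - b') \<le> 0"
      by linarith
    thus "E1 * exp ((c/24)*(4*pi^2/a' + 4*pi^2/b' - a' - b')) \<le> 1"
      unfolding E1_def exp_add[symmetric] by simp
  qed
  finally show ?thesis by simp
qed

definition orient :: "bool \<Rightarrow> real \<times> real \<Rightarrow> real \<times> real" where
  "orient b p = (if b then p else prod.swap p)"

lemma GG_unique:
  assumes "\<alpha> \<le> 1" "0 < t" "GG \<alpha> t = A"
  shows "\<exists>!s. 0 < s \<and> GG \<alpha> s = A"
proof (rule ex1I[of _ t])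
  show "0 < t \<and> GG \<alpha> t = A" using assms by simp
  fix s assume "0 < s \<and> GG \<alpha> s = A"
  thus "s = t" using GG_less_iff[of s t \<alpha>] GG_less_iff[of t s \<alpha>] assms by (cases s t rule: linorder_cases) auto
qed

lemma step_ok:
  assumes "0 < \<alpha>" "\<alpha> \<le> 1" "0 < x" "x \<le> 2*pi" "2*pi < y" "4*pi^2 < x*y" and cft: "cft_spectrum c n"
  shows "alg_step \<alpha> (orient b (x,y)) (orient (\<not>b) (nxt \<alpha> (x,y)))"
    "ZH c n \<alpha> (fst (orient b (x,y))) (snd (orient b (x,y))) \<le>
       SS n (fst (orient (\<not>b) (nxt \<alpha> (x,y)))) (snd (orient (\<not>b) (nxt \<alpha> (x,y))))"
proof -
  define bt where "bt = btilde \<alpha> x y"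
  define A where "A = \<alpha>*y + bt - 4*pi^2/bt"
  define t where "t = Tr \<alpha> A"
  note bp = btilde_props[OF assms(1-6), folded bt_def]
  note v = valid_step[OF assms(1-6), folded bt_def, folded A_def, folded t_def]
  have nx: "nxt \<alpha> (x,y) = (t, 4*pi^2/bt)" by (simp add: nxt_def bt_def A_def t_def Let_def)
  have teq: "t_eq \<alpha> bt y t" using v unfolding t_eq_iff A_def by simp
  have ex1: "\<exists>!s. s > 0 \<and> t_eq \<alpha> bt y s"
    using GG_unique[OF assms(2) v(1,2)] unfolding t_eq_iff A_def by simp
  have y2: "\<not> y \<le> 2*pi" using assms by simp
  show "alg_step \<alpha> (orient b (x,y)) (orient (\<not>b) (nxt \<alpha> (x,y)))"
    using ex1 teq v(1) assms(4) y2 unfolding nx orient_def alg_step_def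
    by (cases b) (simp_all add: bt_def Let_def)
  have y0: "0 < y" using assms pi_gt_zero by linarith
  have b'le: "4*pi^2/t \<le> y" using v(1,3) by (simp add: divide_le_eq mult.commute)
  have tt: "4*pi^2/(4*pi^2/t) = t" by simp
  have p1: "0 < 4*pi^2/t" using v(1) by simp
  have c1: "4*pi^2/bt + 4*pi^2/(4*pi^2/t) - bt - 4*pi^2/t \<le> \<alpha>*(x + y - bt - 4*pi^2/t)"
    using v(4) tt by simp
  have c2: "4*pi^2/(4*pi^2/t) + 4*pi^2/bt - 4*pi^2/t - bt \<le> \<alpha>*(y + x - 4*pi^2/t - bt)"
    using v(4) tt by (simp add: algebra_simps)
  show "ZH c n \<alpha> (fst (orient b (x,y))) (snd (orient b (x,y))) \<le>
       SS n (fst (orient (\<not>b) (nxt \<alpha> (x,y)))) (snd (orient (\<not>b) (nxt \<alpha> (x,y))))"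
  proof (cases b)
    case True
    show ?thesis using H_step[OF cft assms(1) bp(1) p1 bp(2) b'le c1] True tt
      by (simp add: orient_def nx)
  next
    case False
    show ?thesis using H_step[OF cft assms(1) p1 bp(1) b'le bp(2) c2] False tt
      by (simp add: orient_def nx)
  qed
qed

lemma final:
  assumes cft: "cft_spectrum c n" and N1: "1 \<le> N" and b1: "\<beta> 1 = (bL, bR)"
    and pos: "\<And>i. 1 \<le> i \<Longrightarrow> i \<le> N \<Longrightarrow> 0 < fst (\<beta> i) \<and> 0 < snd (\<beta> i)"
    and st: "\<And>i. 1 \<le> i \<Longrightarrow> i < N \<Longrightarrow>
         ZH c n \<alpha> (fst (\<beta> i)) (snd (\<beta> i)) \<le> SS n (fst (\<beta> (Suc i))) (snd (\<beta> (Suc i)))"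
  shows "err c n bL bR \<le>
             ln ((\<Sum>i=1..N. ZL c n \<alpha> (fst (\<beta> i)) (snd (\<beta> i)))
                 + ZH c n \<alpha> (fst (\<beta> N)) (snd (\<beta> N)))"
proof -
  have tel: "1 \<le> m \<Longrightarrow> m \<le> N \<Longrightarrow> SS n bL bR \<le> (\<Sum>i=1..<m. ZL c n \<alpha> (fst (\<beta> i)) (snd (\<beta> i)))
              + SS n (fst (\<beta> m)) (snd (\<beta> m))" for m
  proof (induction m)
    case 0 thus ?case by simp
  next
    case (Suc m)
    show ?case
    proof (cases "m = 0")
      case True thus ?thesis using b1 by simp
    next
      case False
      hence ih: "SS n bL bR \<le> (\<Sum>i=1..<m. ZL c n \<alpha> (fst (\<beta> i)) (snd (\<beta> i)))
              + SS n (fst (\<beta> m)) (snd (\<beta> m))" using Suc by simp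
      have pm: "0 < fst (\<beta> m)" "0 < snd (\<beta> m)" using pos[of m] False Suc.prems by auto
      have "SS n (fst (\<beta> m)) (snd (\<beta> m)) = ZL c n \<alpha> (fst (\<beta> m)) (snd (\<beta> m)) + ZH c n \<alpha> (fst (\<beta> m)) (snd (\<beta> m))"
        using SS_split[OF cft pm] by simp
      moreover have "ZH c n \<alpha> (fst (\<beta> m)) (snd (\<beta> m)) \<le> SS n (fst (\<beta> (Suc m))) (snd (\<beta> (Suc m)))"
        using st[of m] False Suc.prems by simp
      moreover have "(\<Sum>i=1..<Suc m. ZL c n \<alpha> (fst (\<beta> i)) (snd (\<beta> i))) =
          (\<Sum>i=1..<m. ZL c n \<alpha> (fst (\<beta> i)) (snd (\<beta> i))) + ZL c n \<alpha> (fst (\<beta> m)) (snd (\<beta> m))"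
        using False by (simp add: sum.atLeastLessThan_Suc)
      ultimately show ?thesis using ih by simp
    qed
  qed
  define R where "R = (\<Sum>i=1..N. ZL c n \<alpha> (fst (\<beta> i)) (snd (\<beta> i))) + ZH c n \<alpha> (fst (\<beta> N)) (snd (\<beta> N))"
  have pN: "0 < fst (\<beta> N)" "0 < snd (\<beta> N)" using pos[of N] N1 by auto
  have "(\<Sum>i=1..N. ZL c n \<alpha> (fst (\<beta> i)) (snd (\<beta> i))) =
          (\<Sum>i=1..<N. ZL c n \<alpha> (fst (\<beta> i)) (snd (\<beta> i))) + ZL c n \<alpha> (fst (\<beta> N)) (snd (\<beta> N))"
    using N1 by (simp add: sum.atLeastLessThan_Suc atLeastLessThanSuc_atLeastAtMost[symmetric])
  hence SR: "SS n bL bR \<le> R" using tel[OF N1 order_refl] SS_split[OF cft pN, of \<alpha>] unfolding R_def by simp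
  have p1: "0 < bL" "0 < bR" using pos[of 1] N1 b1 by auto
  have c0: "0 \<le> c" using cft unfolding cft_spectrum_def by simp
  have Z: "Zpart c n bL bR = exp ((c/24)*(bL+bR)) * SS n bL bR" using Zpart_eq[OF cft p1] .
  show ?thesis
  proof (cases "SS n bL bR > 0")
    case True
    have "err c n bL bR = ln (SS n bL bR)" unfolding err_def Z using True
      by (simp add: ln_mult)
    also have "\<dots> \<le> ln R" using True SR by simp
    finally show ?thesis unfolding R_def .
  next
    case False
    hence S0: "SS n bL bR = 0" using SS_nonneg[of n bL bR] by simp
    have n0: "n p = 0" for p
    proof -
      have "infsum (ww n bL bR) {p} \<le> infsum (ww n bL bR) UNIV"
        by (rule infsum_mono_neutral) (auto intro: ww_summable[OF cft p1] ww_nonneg)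
      hence "ww n bL bR p \<le> 0" using S0 unfolding SS_def by simp
      thus "n p = 0" by (cases p) (simp add: ww_def mult_le_0_iff)
    qed
    have "ZL c n \<alpha> a b = 0" for a b unfolding ZL_eq by (rule infsum_0) (auto simp: ww_def n0)
    moreover have "ZH c n \<alpha> a b = 0" for a b unfolding ZH_eq by (rule infsum_0) (auto simp: ww_def n0)
    ultimately have "R = 0" unfolding R_def by simp
    moreover have "err c n bL bR \<le> 0" unfolding err_def Z S0 using c0 p1 by simp
    ultimately show ?thesis unfolding R_def by simp
  qed
qed

lemma phi_facts:
  assumes "0 < \<alpha>" "\<alpha> \<le> 1" "0 < \<beta>" "phi \<alpha> \<beta> < x"
  shows "0 < x" "4*pi^2 < x*\<beta>" "4*pi*\<alpha> < GG \<alpha> x + \<alpha>*\<beta>"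
proof -
  define B where "B = \<alpha>*(4*pi - \<beta>)"
  define D where "D = B^2 + 16*pi^2*(1-\<alpha>)"
  have D0: "0 \<le> D" using assms by (simp add: D_def)
  have ph: "phi \<alpha> \<beta> = max (4*pi^2/\<beta>) ((B + sqrt D)/2)"
    by (simp add: phi_def B_def D_def power_mult_distrib)
  have x1: "4*pi^2/\<beta> < x" and x2: "(B + sqrt D)/2 < x" using assms(4) ph by auto
  show "0 < x" using x1 assms(3) by (smt (verit) divide_pos_pos pi_gt_zero zero_less_power)
  show "4*pi^2 < x*\<beta>" using x1 assms(3) by (simp add: divide_less_eq)
  have sq: "sqrt D ^2 = D" using D0 by simp
  define s where "s = sqrt D"
  have "(x - (B + s)/2) * (x - (B - s)/2) = x^2 - B*x + (B^2 - s^2)/4"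
    by (simp add: field_simps power2_eq_square)
  moreover have "(B^2 - s^2)/4 = - 4*pi^2*(1-\<alpha>)" using sq by (simp add: s_def D_def)
  ultimately have "x^2 - B*x - 4*pi^2*(1-\<alpha>) = (x - (B + sqrt D)/2) * (x - (B - sqrt D)/2)"
    by (simp add: s_def)
  moreover have "0 < x - (B + sqrt D)/2" using x2 by simp
  moreover have "0 < x - (B - sqrt D)/2"
  proof -
    have "B + sqrt D < 2*x" using x2 by simp
    moreover have "0 \<le> sqrt D" using D0 by simp
    ultimately have "B - sqrt D < 2*x" by linarith
    thus ?thesis by simp
  qed
  ultimately have "0 < x^2 - B*x - 4*pi^2*(1-\<alpha>)" by simp
  hence "B < x - 4*pi^2*(1-\<alpha>)/x" using \<open>0 < x\<close> by (simp add: field_simps power2_eq_square)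
  thus "4*pi*\<alpha> < GG \<alpha> x + \<alpha>*\<beta>" unfolding GG_def B_def by (simp add: algebra_simps)
qed

lemma orient_simps:
  "fst (orient b p) * snd (orient b p) = fst p * snd p"
  "(0 < fst (orient b p) \<and> 0 < snd (orient b p)) = (0 < fst p \<and> 0 < snd p)"
  "(2*pi < fst (orient b p) \<and> 2*pi < snd (orient b p)) = (2*pi < fst p \<and> 2*pi < snd p)"
  by (cases b; cases p; auto simp: orient_def)+

lemma main_gen:
  assumes "0 < \<alpha>" "\<alpha> \<le> 1" and cft: "cft_spectrum c n"
    and o: "orient fL (x1,y1) = (bL, bR)"
    and "0 < x1" "x1 \<le> 2*pi" "2*pi < y1" "4*pi^2 < x1*y1"
    and "x1 < 2*pi \<Longrightarrow> 4*pi*\<alpha> < GG \<alpha> x1 + \<alpha>*y1"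
  shows "\<exists>N::nat. \<exists>\<beta>::nat \<Rightarrow> real \<times> real.
           N \<ge> 1 \<and> \<beta> 1 = (bL, bR) \<and>
           (\<forall>i. 1 \<le> i \<and> i < N \<longrightarrow> alg_step \<alpha> (\<beta> i) (\<beta> (Suc i))) \<and>
           (\<forall>i. 1 \<le> i \<and> i < N \<longrightarrow> fst (\<beta> i) * snd (\<beta> i) > 4*pi^2) \<and>
           fst (\<beta> N) > 2*pi \<and> snd (\<beta> N) > 2*pi \<and>
           err c n bL bR \<le>
             ln ((\<Sum>i=1..N. ZL c n \<alpha> (fst (\<beta> i)) (snd (\<beta> i)))
                 + ZH c n \<alpha> (fst (\<beta> N)) (snd (\<beta> N)))"
proof -
  obtain M where M1: "\<forall>j<M. 0 < fst ((nxt \<alpha> ^^ j) (x1,y1)) \<and> fst ((nxt \<alpha> ^^ j) (x1,y1)) \<le> 2*pi \<and>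
              2*pi < snd ((nxt \<alpha> ^^ j) (x1,y1)) \<and>
              4*pi^2 < fst ((nxt \<alpha> ^^ j) (x1,y1)) * snd ((nxt \<alpha> ^^ j) (x1,y1))"
    and M2: "2*pi < fst ((nxt \<alpha> ^^ M) (x1,y1)) \<and> 2*pi < snd ((nxt \<alpha> ^^ M) (x1,y1))"
    using dyn[OF assms(1,2,5-9)] by blast
  define seq where "seq j = (nxt \<alpha> ^^ j) (x1,y1)" for j
  define \<beta> where "\<beta> k = orient (fL = even (k - 1)) (seq (k - 1))" for k
  define N where "N = Suc M"
  have bS: "\<beta> (Suc j) = orient (fL = even j) (seq j)" for j by (simp add: \<beta>_def)
  have bSS: "\<beta> (Suc (Suc j)) = orient (\<not> (fL = even j)) (nxt \<alpha> (seq j))" for j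
    by (simp add: \<beta>_def seq_def)
  have sj: "seq j = (fst (seq j), snd (seq j))" for j by simp
  have props: "0 < fst (seq j) \<and> fst (seq j) \<le> 2*pi \<and> 2*pi < snd (seq j) \<and> 4*pi^2 < fst (seq j) * snd (seq j)"
    if "j < M" for j using M1 that by (simp add: seq_def)
  have b1: "\<beta> 1 = (bL, bR)" using o by (simp add: \<beta>_def seq_def)
  have stp: "alg_step \<alpha> (\<beta> i) (\<beta> (Suc i)) \<and>
     ZH c n \<alpha> (fst (\<beta> i)) (snd (\<beta> i)) \<le> SS n (fst (\<beta> (Suc i))) (snd (\<beta> (Suc i)))"
    if hi: "1 \<le> i" "i < N" for i
  proof -
    obtain j where j: "i = Suc j" "j < M" using hi N_def by (cases i) auto
    note p = props[OF j(2)]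
    note so = step_ok[OF assms(1,2) conjunct1[OF p] conjunct1[OF conjunct2[OF p]]
        conjunct1[OF conjunct2[OF conjunct2[OF p]]] conjunct2[OF conjunct2[OF conjunct2[OF p]]] cft,
        of "fL = even j", folded sj]
    have sS: "seq (Suc j) = nxt \<alpha> (seq j)" by (simp add: seq_def)
    show ?thesis unfolding j bS sS using so by simp
  qed
  have pos: "0 < fst (\<beta> i) \<and> 0 < snd (\<beta> i)" if hi: "1 \<le> i" "i \<le> N" for i
  proof -
    obtain j where j: "i = Suc j" "j \<le> M" using hi N_def by (cases i) auto
    have "0 < fst (seq j) \<and> 0 < snd (seq j)"
    proof (cases "j < M")
      case True thus ?thesis using props[OF True] pi_gt_zero by auto
    next
      case False hence "j = M" using j by simp
      hence "2*pi < fst (seq j)" "2*pi < snd (seq j)" using M2 unfolding seq_def by auto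
      thus ?thesis using pi_gt_zero by linarith
    qed
    thus ?thesis unfolding j bS orient_simps .
  qed
  have prod: "fst (\<beta> i) * snd (\<beta> i) > 4*pi^2" if hi: "1 \<le> i" "i < N" for i
  proof -
    obtain j where j: "i = Suc j" "j < M" using hi N_def by (cases i) auto
    show ?thesis unfolding j bS orient_simps using props[OF j(2)] by simp
  qed
  have fin: "fst (\<beta> N) > 2*pi \<and> snd (\<beta> N) > 2*pi"
    unfolding N_def bS orient_simps using M2 by (simp add: seq_def)
  have N1: "1 \<le> N" by (simp add: N_def)
  have E: "err c n bL bR \<le>
             ln ((\<Sum>i=1..N. ZL c n \<alpha> (fst (\<beta> i)) (snd (\<beta> i)))
                 + ZH c n \<alpha> (fst (\<beta> N)) (snd (\<beta> N)))"
    by (rule final[where \<beta>=\<beta>, OF cft N1 b1]) (use pos stp in auto)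
  show ?thesis using N1 b1 stp prod fin E by blast
qed

theorem theorem1:
  fixes c \<alpha> bL bR :: real and n :: "real \<times> real \<Rightarrow> nat"
  assumes "0 < \<alpha>" and "\<alpha> \<le> 1"
    and "cft_spectrum c n"
    and "(bL, bR) \<in> Dom \<alpha>"
  shows "\<exists>N::nat. \<exists>\<beta>::nat \<Rightarrow> real \<times> real.
           N \<ge> 1 \<and> \<beta> 1 = (bL, bR) \<and>
           (\<forall>i. 1 \<le> i \<and> i < N \<longrightarrow> alg_step \<alpha> (\<beta> i) (\<beta> (Suc i))) \<and>
           (\<forall>i. 1 \<le> i \<and> i < N \<longrightarrow> fst (\<beta> i) * snd (\<beta> i) > 4*pi^2) \<and>
           fst (\<beta> N) > 2*pi \<and> snd (\<beta> N) > 2*pi \<and>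
           err c n bL bR \<le>
             ln ((\<Sum>i=1..N. ZL c n \<alpha> (fst (\<beta> i)) (snd (\<beta> i)))
                 + ZH c n \<alpha> (fst (\<beta> N)) (snd (\<beta> N)))"
proof -
  have pi2: "0 < 2*pi" using pi_gt_zero by simp
  consider (A) "2*pi < bL" "2*pi < bR" | (B) "bL \<le> 2*pi" | (C) "2*pi < bL" "bR \<le> 2*pi" by linarith
  thus ?thesis
  proof cases
    case A
    define \<beta> where "\<beta> = (\<lambda>k::nat. (bL, bR))"
    have p0: "0 < bL" "0 < bR" using A pi2 by linarith+
    have "err c n bL bR \<le>
             ln ((\<Sum>i=1..1. ZL c n \<alpha> (fst (\<beta> i)) (snd (\<beta> i)))
                 + ZH c n \<alpha> (fst (\<beta> 1)) (snd (\<beta> 1)))"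
      by (rule final[OF assms(3), of 1]) (use p0 in \<open>auto simp: \<beta>_def\<close>)
    thus ?thesis using A by (intro exI[of _ 1] exI[of _ \<beta>]) (simp add: \<beta>_def)
  next
    case B
    hence d: "2*pi < bR" "phi \<alpha> bR < bL" using assms(4) unfolding Dom_def by auto
    have bR0: "0 < bR" using d pi2 by linarith
    note pf = phi_facts[OF assms(1,2) bR0 d(2)]
    show ?thesis
      by (rule main_gen[OF assms(1-3), of True bL bR]) (use B d pf in \<open>auto simp: orient_def\<close>)
  next
    case C
    hence d: "2*pi < bL" "phi \<alpha> bL < bR" using assms(4) unfolding Dom_def by auto
    have bL0: "0 < bL" using d pi2 by linarith
    note pf = phi_facts[OF assms(1,2) bL0 d(2)]
    show ?thesis
      by (rule main_gen[OF assms(1-3), of False bR bL]) (use C d pf in \<open>auto simp: orient_def mult.commute\<close>)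
  qed
qed

end
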